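(* Let $w\colon E\to(0,\infty)$ be a weight function on the edges of the hypercube graph satisfying $\sigma^*w=w$ for all permutations $\sigma$ of $N$. Then for every game $v$ on $N$ and every $i\in N$, $v_{i,w}(N)=\phi_i(v)$, where $v_{i,w}$ is the unique function with $v_{i,w}(\emptyset)=0$ and $\mathrm{d}v_{i,w}=P_w\mathrm{d}_iv$, and $$\phi_i(v)=\sum_{S\subset N\setminus\{i\}} \frac{|S|!\,(|N|-1-|S|)!}{|N|!}\bigl(v(S\cup\{i\})-v(S)\bigr)$$ is the Shapley value.
   Context: Let $N$ be a finite set of players. A game is a function $v\colon 2^N\to\mathbb{R}$ with $v(\emptyset)=0$. The hypercube graph $G=(V,E)$ has $V=2^N$ and oriented edges $E=\{(S,S\cup\{i\}) : i\in N,\ S\subset N\setminus\{i\}\}$. $\ell^2(V)$ is the space of real functions on $V$. Given $w\colon E\to(0,\infty)$, $\ell^2_w(E)$ is the space of real functions on $E$ with inner product $\langle f,g\rangle_w=\sum_{e\in E}w(e)f(e)g(e)$. $\mathrm{d}\colon \ell^2(V)\to\ell^2_w(E)$ is $\mathrm{d}u(S,S\cup\{i\}) = u(S\cup\{i\})-u(S)$, with range $\mathcal{R}(\mathrm{d})$. For $i\in N$, $\mathrm{d}_i\colon\ell^2(V)\to\ell^2_w(E)$ is defined by $\mathrm{d}_i u(S,S\cup\{j\}) = u(S\cup\{i\})-u(S)$ if $j=i$ and $0$ if $j\ne i$. $P_w$ is the $\langle\cdot,\cdot\rangle_w$-orthogonal projection of $\ell^2_w(E)$ onto $\mathcal{R}(\mathrm{d})$.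 For a permutation $\sigma$ of $N$, $(\sigma^*w)(S,S\cup\{i\}) = w(\sigma(S),\sigma(S)\cup\{\sigma(i)\})$. *)

theory Defs
  imports "HOL-Analysis.Analysis" "HOL-Combinatorics.Permutations"
begin

text \<open>Vertices of the hypercube: subsets of N. Oriented edges (S, S \<union> {i}).
  Functions on V are 'a set => real (only values on Pow N matter);
  functions on E are ('a set * 'a set) => real (only values on E matter).\<close>

definition hedges :: "'a set \<Rightarrow> ('a set \<times> 'a set) set" where
  "hedges N = {(S, insert i S) | S i. i \<in> N \<and> S \<subseteq> N - {i}}"

definition winner :: "'a set \<Rightarrow> ('a set \<times> 'a set \<Rightarrow> real) \<Rightarrow>
    ('a set \<times> 'a set \<Rightarrow> real) \<Rightarrow> ('a set \<times> 'a set \<Rightarrow> real) \<Rightarrow> real" where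
  "winner N w f g = (\<Sum>e\<in>hedges N. w e * f e * g e)"

definition dgrad :: "'a set \<Rightarrow> ('a set \<Rightarrow> real) \<Rightarrow> ('a set \<times> 'a set \<Rightarrow> real)" where
  "dgrad N u = (\<lambda>e. if e \<in> hedges N then u (snd e) - u (fst e) else 0)"

definition dgrad_i :: "'a set \<Rightarrow> 'a \<Rightarrow> ('a set \<Rightarrow> real) \<Rightarrow> ('a set \<times> 'a set \<Rightarrow> real)" where
  "dgrad_i N i u = (\<lambda>e. if e \<in> hedges N \<and> snd e = insert i (fst e)
                         then u (insert i (fst e)) - u (fst e) else 0)"

definition range_d :: "'a set \<Rightarrow> ('a set \<times> 'a set \<Rightarrow> real) set" where
  "range_d N = range (dgrad N)"

definition proj_w :: "'a set \<Rightarrow> ('a set \<times> 'a set \<Rightarrow> real) \<Rightarrow>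
    ('a set \<times> 'a set \<Rightarrow> real) \<Rightarrow> ('a set \<times> 'a set \<Rightarrow> real)" where
  "proj_w N w f = (THE g. g \<in> range_d N \<and>
      (\<forall>h\<in>range_d N. winner N w (\<lambda>e. f e - g e) h = 0))"

definition v_iw :: "'a set \<Rightarrow> ('a set \<times> 'a set \<Rightarrow> real) \<Rightarrow> 'a \<Rightarrow>
    ('a set \<Rightarrow> real) \<Rightarrow> ('a set \<Rightarrow> real)" where
  "v_iw N w i v = (THE u. (\<forall>S. S \<notin> Pow N \<longrightarrow> u S = 0) \<and> u {} = 0 \<and>
      dgrad N u = proj_w N w (dgrad_i N i v))"

definition shapley :: "'a set \<Rightarrow> 'a \<Rightarrow> ('a set \<Rightarrow> real) \<Rightarrow> real" where
  "shapley N i v = (\<Sum>S\<in>Pow (N - {i}).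
      fact (card S) * fact (card N - 1 - card S) / fact (card N) * (v (insert i S) - v S))"

end

theory Submission
  imports Defs
begin


lemma hedges_sub: "hedges N \<subseteq> Pow N \<times> Pow N"
  unfolding hedges_def by auto

lemma hedges_finite: "finite N \<Longrightarrow> finite (hedges N)"
  by (rule finite_subset[OF hedges_sub]) auto

lemma hedges_param1:
  "hedges N = (\<lambda>(T,j). (T, insert j T)) ` (SIGMA T:Pow N. N - T)"
  unfolding hedges_def by auto

lemma hedges_inj1: "inj_on (\<lambda>(T,j). (T, insert j T)) (SIGMA T:Pow N. N - T)"
  by (auto simp: inj_on_def)

lemma hedges_param2:
  "hedges N = (\<lambda>(T,j). (T - {j}, T)) ` (SIGMA T:Pow N. T)"
  unfolding hedges_def by (auto simp: image_iff)

lemma hedges_inj2: "inj_on (\<lambda>(T,j). (T - {j}, T)) (SIGMA T:Pow N. T)"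
  by (auto simp: inj_on_def)

lemma sum_hedges1: "finite N \<Longrightarrow>
  (\<Sum>e\<in>hedges N. F e) = (\<Sum>T\<in>Pow N. \<Sum>j\<in>N - T. F (T, insert j T))"
  apply (subst hedges_param1)
  apply (subst sum.reindex[OF hedges_inj1])
  apply (subst sum.Sigma) by (auto simp: comp_def case_prod_unfold)

lemma sum_hedges2: "finite N \<Longrightarrow>
  (\<Sum>e\<in>hedges N. F e) = (\<Sum>T\<in>Pow N. \<Sum>j\<in>T. F (T - {j}, T))"
  apply (subst hedges_param2)
  apply (subst sum.reindex[OF hedges_inj2])
  apply (subst sum.Sigma) by (auto simp: comp_def case_prod_unfold intro: finite_subset)



definition bS :: "'a set \<Rightarrow> 'a set \<Rightarrow> ('a set \<times> 'a set \<Rightarrow> real)" where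
  "bS N S = dgrad N (\<lambda>T. if T = S then 1 else 0)"

definition spn :: "'a set \<Rightarrow> 'a set set \<Rightarrow> ('a set \<Rightarrow> real) \<Rightarrow> ('a set \<times> 'a set \<Rightarrow> real)" where
  "spn N A c = (\<lambda>e. \<Sum>S\<in>A. c S * bS N S e)"

lemma winner_diff: "winner N w (\<lambda>e. f e - g e) h = winner N w f h - winner N w g h"
  unfolding winner_def by (simp add: algebra_simps sum_subtractf)

lemma winner_add: "winner N w (\<lambda>e. f e + g e) h = winner N w f h + winner N w g h"
  unfolding winner_def by (simp add: algebra_simps sum.distrib)

lemma winner_scal: "winner N w (\<lambda>e. t * f e) h = t * winner N w f h"
  unfolding winner_def by (simp add: algebra_simps sum_distrib_left)

lemma winner_sym: "winner N w f g = winner N w g f"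
  unfolding winner_def by (simp add: algebra_simps)

lemma winner_spn: "winner N w f (spn N A c) = (\<Sum>S\<in>A. c S * winner N w f (bS N S))"
  unfolding winner_def spn_def
  by (simp add: sum_distrib_left sum_distrib_right algebra_simps sum.swap[of _ A])

lemma winner_self_zero:
  assumes fin: "finite N" and pos: "\<forall>e\<in>hedges N. w e > 0" and z: "winner N w r r = 0"
  shows "\<forall>e\<in>hedges N. r e = 0"
proof -
  have nn: "\<forall>e\<in>hedges N. 0 \<le> w e * r e * r e"
  proof
    fix e assume "e \<in> hedges N"
    hence "0 \<le> w e" using pos by (simp add: less_imp_le)
    thus "0 \<le> w e * r e * r e" unfolding mult.assoc by (rule mult_nonneg_nonneg[OF _ zero_le_square])
  qed
  have s0: "(\<Sum>e\<in>hedges N. w e * r e * r e) = 0" using z by (simp only: winner_def)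
  have "\<forall>e\<in>hedges N. w e * r e * r e = 0"
    using sum_nonneg_eq_0_iff[OF hedges_finite[OF fin], of "\<lambda>e. w e * r e * r e"] nn s0 by blast
  thus ?thesis using pos by (metis mult_eq_0_iff less_irrefl)
qed

lemma winner_zero:
  assumes fin: "finite N" and pos: "\<forall>e\<in>hedges N. w e > 0" and z: "winner N w r r = 0"
  shows "winner N w f r = 0"
  using winner_self_zero[OF assms] unfolding winner_def by simp

lemma proj_exists_gen:
  assumes fin: "finite N" and pos: "\<forall>e\<in>hedges N. w e > 0" and finA: "finite A"
  shows "\<forall>f. \<exists>c. \<forall>T\<in>A. winner N w (\<lambda>e. f e - spn N A c e) (bS N T) = 0"
  using finA
proof (induction A rule: finite_induct)
  case empty
  then show ?case by simp
next
  case (insert S A)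
  show ?case
  proof
    fix f
    obtain cp where cp: "\<forall>T\<in>A. winner N w (\<lambda>e. f e - spn N A cp e) (bS N T) = 0"
      using insert.IH by blast
    obtain cq where cq: "\<forall>T\<in>A. winner N w (\<lambda>e. bS N S e - spn N A cq e) (bS N T) = 0"
      using insert.IH by blast
    define r where "r = (\<lambda>e. bS N S e - spn N A cq e)"
    define x where "x = (\<lambda>e. f e - spn N A cp e)"
    define t where "t = (if winner N w r r = 0 then 0 else winner N w x r / winner N w r r)"
    define c where "c = (\<lambda>T. if T = S then t else cp T - t * cq T)"
    have sp: "spn N (insert S A) c = (\<lambda>e. spn N A cp e + t * r e)"
    proof
      fix e
      have "spn N (insert S A) c e = t * bS N S e + (\<Sum>T\<in>A. (cp T - t * cq T) * bS N T e)"
        unfolding spn_def c_def using insert.hyps by (simp add: sum.insert) (intro sum.cong; auto)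
      also have "\<dots> = spn N A cp e + t * r e"
        unfolding spn_def r_def by (simp add: algebra_simps sum_subtractf sum_distrib_left)
      finally show "spn N (insert S A) c e = spn N A cp e + t * r e" .
    qed
    have y: "(\<lambda>e. f e - spn N (insert S A) c e) = (\<lambda>e. x e - t * r e)"
      unfolding sp x_def by auto
    have rA: "\<forall>T\<in>A. winner N w r (bS N T) = 0" using cq r_def by simp
    have yA: "\<forall>T\<in>A. winner N w (\<lambda>e. x e - t * r e) (bS N T) = 0"
      using cp rA by (simp add: winner_diff winner_scal x_def)
    have bsplit: "bS N S = (\<lambda>e. r e + spn N A cq e)" unfolding r_def by auto
    have "winner N w (\<lambda>e. x e - t * r e) (bS N S)
        = winner N w (\<lambda>e. x e - t * r e) r + winner N w (\<lambda>e. x e - t * r e) (spn N A cq)"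
      apply (subst bsplit) apply (subst winner_sym) apply (subst winner_add)
      by (rule arg_cong2[where f="(+)"]; rule winner_sym)
    also have "winner N w (\<lambda>e. x e - t * r e) (spn N A cq) = 0"
      unfolding winner_spn using yA by simp
    also have "winner N w (\<lambda>e. x e - t * r e) r = 0"
    proof (cases "winner N w r r = 0")
      case True
      then show ?thesis using winner_zero[OF fin pos True] by blast
    next
      case False
      have "winner N w (\<lambda>e. x e - t * r e) r = winner N w x r - t * winner N w r r"
        by (simp only: winner_diff winner_scal)
      then show ?thesis using False unfolding t_def by simp
    qed
    finally have yS: "winner N w (\<lambda>e. x e - t * r e) (bS N S) = 0" by simp
    show "\<exists>c. \<forall>T\<in>insert S A. winner N w (\<lambda>e. f e - spn N (insert S A) c e) (bS N T) = 0"
      by (rule exI[of _ c]) (simp add: y yA yS)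
  qed
qed



lemma spn_dgrad: assumes fin: "finite N" shows "spn N (Pow N) c = dgrad N c"
proof
  fix e
  show "spn N (Pow N) c e = dgrad N c e"
  proof (cases "e \<in> hedges N")
    case True
    hence m: "fst e \<in> Pow N" "snd e \<in> Pow N" using hedges_sub[of N] by (metis mem_Times_iff subsetD)+
    have "spn N (Pow N) c e = (\<Sum>S\<in>Pow N. (if S = snd e then c S else 0) - (if S = fst e then c S else 0))"
      unfolding spn_def bS_def dgrad_def using True by (intro sum.cong) (auto simp: algebra_simps)
    also have "\<dots> = c (snd e) - c (fst e)"
      using m fin by (simp add: sum_subtractf)
    finally show ?thesis unfolding dgrad_def using True by simp
  next
    case False
    then show ?thesis unfolding spn_def bS_def dgrad_def by simp
  qed
qed

lemma dgrad_diff: "dgrad N (\<lambda>S. u S - u' S) = (\<lambda>e. dgrad N u e - dgrad N u' e)"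
  unfolding dgrad_def by auto

lemma proj_spec:
  assumes fin: "finite N" and pos: "\<forall>e\<in>hedges N. w e > 0"
  shows "proj_w N w f \<in> range_d N \<and> (\<forall>h\<in>range_d N. winner N w (\<lambda>e. f e - proj_w N w f e) h = 0)"
proof -
  obtain c where c: "\<forall>T\<in>Pow N. winner N w (\<lambda>e. f e - spn N (Pow N) c e) (bS N T) = 0"
    using proj_exists_gen[OF fin pos, of "Pow N"] fin by blast
  define p where "p = dgrad N c"
  have P: "p \<in> range_d N \<and> (\<forall>h\<in>range_d N. winner N w (\<lambda>e. f e - p e) h = 0)"
  proof
    show "p \<in> range_d N" unfolding p_def range_d_def by simp
    show "\<forall>h\<in>range_d N. winner N w (\<lambda>e. f e - p e) h = 0"
    proof
      fix h assume "h \<in> range_d N"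
      then obtain u where "h = dgrad N u" unfolding range_d_def by auto
      hence h: "h = spn N (Pow N) u" using spn_dgrad[OF fin] by simp
      show "winner N w (\<lambda>e. f e - p e) h = 0"
        unfolding h winner_spn using c spn_dgrad[OF fin] p_def by simp
    qed
  qed
  have U: "q = p" if q: "q \<in> range_d N \<and> (\<forall>h\<in>range_d N. winner N w (\<lambda>e. f e - q e) h = 0)" for q
  proof -
    obtain u1 where u1: "p = dgrad N u1" using P unfolding range_d_def by auto
    obtain u2 where u2: "q = dgrad N u2" using q unfolding range_d_def by auto
    define h where "h = (\<lambda>e. p e - q e)"
    have hr: "h \<in> range_d N" unfolding h_def u1 u2 range_d_def apply (rule range_eqI[where x="\<lambda>S. u1 S - u2 S"]) by (simp add: dgrad_diff)
    have "winner N w (\<lambda>e. f e - q e) h - winner N w (\<lambda>e. f e - p e) h = 0"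
      using P q hr by simp
    hence "winner N w h h = 0" unfolding winner_diff h_def by simp
    hence z: "\<forall>e\<in>hedges N. h e = 0" using winner_self_zero[OF fin pos] by blast
    show "q = p"
    proof
      fix e show "q e = p e"
        using z unfolding h_def u1 u2 by (cases "e \<in> hedges N") (auto simp: dgrad_def)
    qed
  qed
  have "proj_w N w f = p" unfolding proj_w_def apply (rule the_equality) apply (rule P) apply (erule U) done
  thus ?thesis using P by simp
qed

lemma viw_spec:
  assumes fin: "finite N" and pos: "\<forall>e\<in>hedges N. w e > 0"
  shows "v_iw N w i v {} = 0 \<and> dgrad N (v_iw N w i v) = proj_w N w (dgrad_i N i v)"
proof -
  let ?p = "proj_w N w (dgrad_i N i v)"
  obtain u0 where u0: "?p = dgrad N u0" using proj_spec[OF fin pos] unfolding range_d_def by auto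
  define u where "u = (\<lambda>S. if S \<in> Pow N then u0 S - u0 {} else 0)"
  have du: "dgrad N u = ?p" unfolding u0
  proof
    fix e show "dgrad N u e = dgrad N u0 e"
    proof (cases "e \<in> hedges N")
      case True
      hence m: "fst e \<in> Pow N" "snd e \<in> Pow N" using hedges_sub[of N] by (metis mem_Times_iff subsetD)+
      thus ?thesis using True unfolding dgrad_def u_def by simp
    qed (simp add: dgrad_def)
  qed
  have Pu: "(\<forall>S. S \<notin> Pow N \<longrightarrow> u S = 0) \<and> u {} = 0 \<and> dgrad N u = ?p"
    using du unfolding u_def by simp
  have U: "u' = u" if u': "(\<forall>S. S \<notin> Pow N \<longrightarrow> u' S = 0) \<and> u' {} = 0 \<and> dgrad N u' = ?p" for u'
  proof
    fix S
    show "u' S = u S"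
    proof (cases "S \<in> Pow N")
      case False thus ?thesis using u' Pu by simp
    next
      case True
      hence "finite S" using fin finite_subset by auto
      thus ?thesis using True
      proof (induction S rule: finite_induct)
        case empty thus ?case using u' Pu by simp
      next
        case (insert j T)
        have e: "(T, insert j T) \<in> hedges N" using insert unfolding hedges_def by auto
        have "u' (insert j T) - u' T = u (insert j T) - u T"
          using fun_cong[OF u'[THEN conjunct2, THEN conjunct2], of "(T, insert j T)"]
                fun_cong[OF du, of "(T, insert j T)"] e unfolding dgrad_def by simp
        thus ?case using insert by simp
      qed
    qed
  qed
  have "v_iw N w i v = u" unfolding v_iw_def
    apply (rule the_equality) apply (rule Pu) apply (erule U) done
  thus ?thesis using Pu by simp
qed



lemma perm_exists:
  assumes fin: "finite N" and j: "j \<in> N" and j': "j' \<in> N"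
    and S: "S \<subseteq> N - {j}" and S': "S' \<subseteq> N - {j'}" and c: "card S = card S'"
  shows "\<exists>\<sigma>. \<sigma> permutes N \<and> \<sigma> ` S = S' \<and> \<sigma> j = j'"
proof -
  have fS: "finite S" "finite S'" using fin S S' finite_subset by blast+
  obtain f1 where f1: "bij_betw f1 S S'" using finite_same_card_bij[OF fS c] by blast
  define R where "R = N - insert j S"
  define R' where "R' = N - insert j' S'"
  have "j \<notin> S" "j' \<notin> S'" using S S' by auto
  hence "card (insert j S) = card (insert j' S')" using fS c by simp
  moreover have "insert j S \<subseteq> N" "insert j' S' \<subseteq> N" using j j' S S' by auto
  ultimately have "card R = card R'" unfolding R_def R'_def
    using fin fS by (simp add: card_Diff_subset)
  moreover have "finite R" "finite R'" using fin unfolding R_def R'_def by auto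
  ultimately obtain f2 where f2: "bij_betw f2 R R'" using finite_same_card_bij by blast
  define \<sigma> where "\<sigma> x = (if x \<in> S then f1 x else if x = j then j' else if x \<in> N then f2 x else x)" for x
  have b1: "bij_betw \<sigma> S S'" using f1 by (rule bij_betw_cong[THEN iffD1, rotated]) (simp add: \<sigma>_def)
  have b2: "bij_betw \<sigma> {j} {j'}" using S by (auto simp: \<sigma>_def bij_betw_def)
  have b3: "bij_betw \<sigma> R R'" using f2 by (rule bij_betw_cong[THEN iffD1, rotated]) (auto simp: \<sigma>_def R_def)
  have "bij_betw \<sigma> (S \<union> {j} \<union> R) (S' \<union> {j'} \<union> R')"
    by (intro bij_betw_combine b1 b2 b3) (use S S' in \<open>auto simp: R'_def\<close>)
  moreover have "S \<union> {j} \<union> R = N" "S' \<union> {j'} \<union> R' = N" using S S' j j' by (auto simp: R_def R'_def)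
  ultimately have "bij_betw \<sigma> N N" by simp
  moreover have "\<And>x. x \<notin> N \<Longrightarrow> \<sigma> x = x" using S j by (auto simp: \<sigma>_def)
  ultimately have "\<sigma> permutes N" by (rule bij_imp_permutes)
  moreover have "\<sigma> ` S = S'" using b1 by (simp add: bij_betw_def)
  moreover have "\<sigma> j = j'" using S by (auto simp: \<sigma>_def)
  ultimately show ?thesis by blast
qed



definition lw :: "'a set \<Rightarrow> ('a set \<times> 'a set \<Rightarrow> real) \<Rightarrow> nat \<Rightarrow> real" where
  "lw N w k = w (SOME e. e \<in> hedges N \<and> card (fst e) = k)"

definition acoef :: "nat \<Rightarrow> nat \<Rightarrow> real" where
  "acoef n k = fact k * fact (n - 1 - k) / fact n"

definition hpot :: "'a set \<Rightarrow> ('a set \<times> 'a set \<Rightarrow> real) \<Rightarrow> 'a set \<Rightarrow> real" where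
  "hpot N w T = (\<Sum>k<card T. acoef (card N) k / lw N w k)"

lemma w_level:
  assumes fin: "finite N"
    and sym: "\<forall>\<sigma>. \<sigma> permutes N \<longrightarrow>
           (\<forall>i\<in>N. \<forall>S. S \<subseteq> N - {i} \<longrightarrow>
              w (\<sigma> ` S, insert (\<sigma> i) (\<sigma> ` S)) = w (S, insert i S))"
    and e: "e \<in> hedges N"
  shows "w e = lw N w (card (fst e))"
proof -
  define e' where "e' = (SOME e'. e' \<in> hedges N \<and> card (fst e') = card (fst e))"
  have e': "e' \<in> hedges N \<and> card (fst e') = card (fst e)"
    unfolding e'_def by (rule someI[of _ e]) (use e in simp)
  obtain S j where Sj: "e = (S, insert j S)" "j \<in> N" "S \<subseteq> N - {j}" using e unfolding hedges_def by auto
  obtain S' j' where Sj': "e' = (S', insert j' S')" "j' \<in> N" "S' \<subseteq> N - {j'}" using e' unfolding hedges_def by auto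
  have "card S = card S'" using e' Sj Sj' by simp
  then obtain \<sigma> where \<sigma>: "\<sigma> permutes N" "\<sigma> ` S = S'" "\<sigma> j = j'"
    using perm_exists[OF fin Sj(2) Sj'(2) Sj(3) Sj'(3)] by blast
  have "w (S', insert j' S') = w (S, insert j S)" using sym \<sigma> Sj by metis
  thus ?thesis unfolding lw_def e'_def[symmetric] using Sj Sj' by simp
qed

lemma g_val:
  assumes fin: "finite N"
    and sym: "\<forall>\<sigma>. \<sigma> permutes N \<longrightarrow>
           (\<forall>i\<in>N. \<forall>S. S \<subseteq> N - {i} \<longrightarrow>
              w (\<sigma> ` S, insert (\<sigma> i) (\<sigma> ` S)) = w (S, insert i S))"
    and e: "e \<in> hedges N"
  shows "dgrad N (hpot N w) e = acoef (card N) (card (fst e)) / w e"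
proof -
  obtain S j where Sj: "e = (S, insert j S)" "j \<in> N" "S \<subseteq> N - {j}" using e unfolding hedges_def by auto
  have "finite S" "j \<notin> S" using Sj fin finite_subset by auto
  hence "card (insert j S) = Suc (card S)" by simp
  hence "hpot N w (insert j S) - hpot N w S = acoef (card N) (card S) / lw N w (card S)"
    unfolding hpot_def by simp
  thus ?thesis using e Sj w_level[OF fin sym e] unfolding dgrad_def by simp
qed

lemma acoef_id:
  assumes "k \<le> n" "1 \<le> n"
  shows "real k * acoef n (k - 1) - real (n - k) * acoef n k
         = (if k = n then 1 else 0) - (if k = 0 then 1 else 0)"
proof -
  have fn: "fact n = real n * fact (n - 1)" using assms fact_reduce[of n, where 'a=real] by simp
  show ?thesis
  proof (cases "k = 0")
    case True
    then show ?thesis using assms fn by (simp add: acoef_def)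
  next
    case False
    show ?thesis
    proof (cases "k = n")
      case True
      then show ?thesis using assms fn False by (simp add: acoef_def)
    next
      case kn: False
      have a: "real k * fact (k - 1) = fact k" using False fact_reduce[of k, where 'a=real] by simp
      have b: "real (n - k) * fact (n - 1 - k) = fact (n - k)"
      proof -
        have m: "n - k = Suc (n - 1 - k)" using kn assms by linarith
        show ?thesis unfolding m by (simp only: fact_Suc)
      qed
      have c: "n - 1 - (k - 1) = n - k" using False by simp
      have "real k * acoef n (k - 1) = fact k * fact (n - k) / fact n"
        unfolding acoef_def c using a by (simp add: mult.assoc[symmetric])
      moreover have "real (n - k) * acoef n k = fact k * fact (n - k) / fact n"
        unfolding acoef_def using b by (simp add: algebra_simps)
      ultimately show ?thesis using False kn by simp
    qed
  qed
qed



lemma ident1: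
  assumes fin: "finite N" and pos: "\<forall>e\<in>hedges N. w e > 0"
    and sym: "\<forall>\<sigma>. \<sigma> permutes N \<longrightarrow>
           (\<forall>i\<in>N. \<forall>S. S \<subseteq> N - {i} \<longrightarrow>
              w (\<sigma> ` S, insert (\<sigma> i) (\<sigma> ` S)) = w (S, insert i S))"
    and ne: "N \<noteq> {}"
  shows "winner N w (dgrad N u) (dgrad N (hpot N w)) = u N - u {}"
proof -
  let ?n = "card N"
  let ?a = "acoef ?n"
  have "winner N w (dgrad N u) (dgrad N (hpot N w))
      = (\<Sum>e\<in>hedges N. ?a (card (fst e)) * u (snd e) - ?a (card (fst e)) * u (fst e))"
    unfolding winner_def
  proof (intro sum.cong refl)
    fix e assume e: "e \<in> hedges N"
    have nz: "w e \<noteq> 0" using pos e by auto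
    have "w e * dgrad N u e * dgrad N (hpot N w) e = w e * (u (snd e) - u (fst e)) * (?a (card (fst e)) / w e)"
      using g_val[OF fin sym e] e by (simp add: dgrad_def)
    also have "\<dots> = ?a (card (fst e)) * (u (snd e) - u (fst e))" using nz by simp
    finally show "w e * dgrad N u e * dgrad N (hpot N w) e = ?a (card (fst e)) * u (snd e) - ?a (card (fst e)) * u (fst e)"
      by (simp add: right_diff_distrib)
  qed
  also have "\<dots> = (\<Sum>e\<in>hedges N. ?a (card (fst e)) * u (snd e)) - (\<Sum>e\<in>hedges N. ?a (card (fst e)) * u (fst e))"
    by (simp add: sum_subtractf)
  also have "(\<Sum>e\<in>hedges N. ?a (card (fst e)) * u (snd e)) = (\<Sum>T\<in>Pow N. real (card T) * ?a (card T - 1) * u T)"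
    unfolding sum_hedges2[OF fin]
  proof (intro sum.cong refl)
    fix T assume "T \<in> Pow N"
    hence fT: "finite T" using fin finite_subset by auto
    have "(\<Sum>j\<in>T. ?a (card (fst (T - {j}, T))) * u (snd (T - {j}, T))) = (\<Sum>j\<in>T. ?a (card T - 1) * u T)"
      using fT by (intro sum.cong refl) simp
    thus "(\<Sum>j\<in>T. ?a (card (fst (T - {j}, T))) * u (snd (T - {j}, T))) = real (card T) * ?a (card T - 1) * u T"
      by simp
  qed
  also have "(\<Sum>e\<in>hedges N. ?a (card (fst e)) * u (fst e)) = (\<Sum>T\<in>Pow N. real (?n - card T) * ?a (card T) * u T)"
    unfolding sum_hedges1[OF fin]
  proof (intro sum.cong refl)
    fix T assume "T \<in> Pow N"
    hence fT: "finite T" "T \<subseteq> N" using fin finite_subset by auto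
    thus "(\<Sum>j\<in>N - T. ?a (card (fst (T, insert j T))) * u (fst (T, insert j T))) = real (?n - card T) * ?a (card T) * u T"
      by (simp add: card_Diff_subset)
  qed
  also have "(\<Sum>T\<in>Pow N. real (card T) * ?a (card T - 1) * u T) - (\<Sum>T\<in>Pow N. real (?n - card T) * ?a (card T) * u T)
      = (\<Sum>T\<in>Pow N. ((if T = N then 1 else 0) - (if T = {} then 1 else 0)) * u T)"
    unfolding sum_subtractf[symmetric]
  proof (intro sum.cong refl)
    fix T assume "T \<in> Pow N"
    hence fT: "finite T" "T \<subseteq> N" using fin finite_subset by auto
    have k: "card T \<le> ?n" using fT fin by (simp add: card_mono)
    have n1: "1 \<le> ?n" using ne fin by (simp add: Suc_le_eq card_gt_0_iff)
    have eN: "(card T = ?n) = (T = N)" using fT fin card_subset_eq by blast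
    have e0: "(card T = 0) = (T = {})" using fT by simp
    have "real (card T) * ?a (card T - 1) * u T - real (?n - card T) * ?a (card T) * u T
        = (real (card T) * ?a (card T - 1) - real (?n - card T) * ?a (card T)) * u T"
      by (simp add: algebra_simps)
    also have "\<dots> = ((if T = N then 1 else 0) - (if T = {} then 1 else 0)) * u T"
      using acoef_id[OF k n1] eN e0 by simp
    finally show "real (card T) * ?a (card T - 1) * u T - real (?n - card T) * ?a (card T) * u T
        = ((if T = N then 1 else 0) - (if T = {} then 1 else 0)) * u T" .
  qed
  also have "\<dots> = (\<Sum>T\<in>Pow N. (if T = N then u T else 0) - (if T = {} then u T else 0))"
    by (intro sum.cong refl) simp
  also have "\<dots> = u N - u {}"
    using fin by (simp only: sum_subtractf sum.delta' finite_Pow_iff) simp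
  finally show ?thesis .
qed

lemma ident2:
  assumes fin: "finite N" and pos: "\<forall>e\<in>hedges N. w e > 0"
    and sym: "\<forall>\<sigma>. \<sigma> permutes N \<longrightarrow>
           (\<forall>i\<in>N. \<forall>S. S \<subseteq> N - {i} \<longrightarrow>
              w (\<sigma> ` S, insert (\<sigma> i) (\<sigma> ` S)) = w (S, insert i S))"
    and i: "i \<in> N"
  shows "winner N w (dgrad_i N i v) (dgrad N (hpot N w)) = shapley N i v"
proof -
  let ?n = "card N"
  let ?a = "acoef ?n"
  let ?F = "\<lambda>T. ?a (card T) * (v (insert i T) - v T)"
  have "winner N w (dgrad_i N i v) (dgrad N (hpot N w))
      = (\<Sum>e\<in>hedges N. if snd e = insert i (fst e) then ?F (fst e) else 0)"
    unfolding winner_def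
  proof (intro sum.cong refl)
    fix e assume e: "e \<in> hedges N"
    have nz: "w e \<noteq> 0" using pos e by auto
    show "w e * dgrad_i N i v e * dgrad N (hpot N w) e = (if snd e = insert i (fst e) then ?F (fst e) else 0)"
      using g_val[OF fin sym e] e nz by (simp add: dgrad_i_def)
  qed
  also have "\<dots> = (\<Sum>T\<in>Pow N. if i \<notin> T then ?F T else 0)"
    unfolding sum_hedges1[OF fin]
  proof (intro sum.cong refl)
    fix T assume T: "T \<in> Pow N"
    have "(\<Sum>j\<in>N - T. if snd (T, insert j T) = insert i (fst (T, insert j T)) then ?F (fst (T, insert j T)) else 0)
        = (\<Sum>j\<in>N - T. if j = i then ?F T else 0)"
    proof (intro sum.cong refl)
      fix j assume j: "j \<in> N - T"
      have "(insert j T = insert i T) = (j = i)" using j by blast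
      thus "(if snd (T, insert j T) = insert i (fst (T, insert j T)) then ?F (fst (T, insert j T)) else 0)
          = (if j = i then ?F T else 0)" by simp
    qed
    also have "\<dots> = (if i \<notin> T then ?F T else 0)"
      using fin i by (simp add: sum.delta')
    finally show "(\<Sum>j\<in>N - T. if snd (T, insert j T) = insert i (fst (T, insert j T)) then ?F (fst (T, insert j T)) else 0)
        = (if i \<notin> T then ?F T else 0)" .
  qed
  also have "\<dots> = (\<Sum>T\<in>{T\<in>Pow N. i \<notin> T}. ?F T)"
    using fin by (intro sum.inter_filter[symmetric]) simp
  also have "{T\<in>Pow N. i \<notin> T} = Pow (N - {i})" by auto
  finally show ?thesis unfolding shapley_def acoef_def by simp
qed

theorem corollary4p2:
  fixes N :: "'a set" and w :: "'a set \<times> 'a set \<Rightarrow> real"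
  assumes "finite N"
    and "\<forall>e\<in>hedges N. w e > 0"
    and "\<forall>\<sigma>. \<sigma> permutes N \<longrightarrow>
           (\<forall>i\<in>N. \<forall>S. S \<subseteq> N - {i} \<longrightarrow>
              w (\<sigma> ` S, insert (\<sigma> i) (\<sigma> ` S)) = w (S, insert i S))"
  shows "\<forall>v :: 'a set \<Rightarrow> real. v {} = 0 \<longrightarrow>
           (\<forall>i\<in>N. v_iw N w i v N = shapley N i v)"
proof (intro allI impI ballI)
  fix v :: "'a set \<Rightarrow> real" and i assume i: "i \<in> N"
  note fin = assms(1) and pos = assms(2) and sym = assms(3)
  have ne: "N \<noteq> {}" using i by auto
  let ?u = "v_iw N w i v"
  let ?f = "dgrad_i N i v"
  let ?g = "dgrad N (hpot N w)"
  have U: "?u {} = 0" "dgrad N ?u = proj_w N w ?f" using viw_spec[OF fin pos] by auto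
  have gr: "?g \<in> range_d N" unfolding range_d_def by simp
  have orth: "winner N w (\<lambda>e. ?f e - proj_w N w ?f e) ?g = 0"
    using proj_spec[OF fin pos, of ?f] gr by blast
  have "?u N = ?u N - ?u {}" using U by simp
  also have "\<dots> = winner N w (dgrad N ?u) ?g" using ident1[OF fin pos sym ne] by simp
  also have "\<dots> = winner N w (proj_w N w ?f) ?g" using U by simp
  also have "\<dots> = winner N w ?f ?g" using orth unfolding winner_diff by simp
  also have "\<dots> = shapley N i v" by (rule ident2[OF fin pos sym i])
  finally show "?u N = shapley N i v" .
qed

end
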